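(* Let $(r_k)_{k\ge1}$ be a sequence of real numbers such that for every $\epsilon>0$ there exists $K=K(\epsilon)\in\mathbb{N}$ with the following property: whenever $k_1,\dots,k_n\in\mathbb{N}$ satisfy $k_1,\dots,k_n\ge K$ and $k=k_1+\dots+k_n$, we have $r_k\le r_{k_1}+\dots+r_{k_n}+k\epsilon$. Then $\lim_{k\to\infty}r_k/k$ exists. *)

theory Defs
  imports Complex_Main "HOL-Library.Extended_Real"
begin

end

theory Submission
  imports Defs
begin

lemma key:
  fixes r :: "nat \<Rightarrow> real"
  assumes H: "\<forall>ks::nat list. ks \<noteq> [] \<longrightarrow>
             (\<forall>x\<in>set ks. x \<ge> 1 \<and> x \<ge> K) \<longrightarrow>
             r (sum_list ks) \<le> sum_list (map r ks) + real (sum_list ks) * e"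
    and m: "m \<ge> 1" "m \<ge> K" and k: "k \<ge> m"
  shows "r k \<le> real k * (r m / m) + (\<Sum>j<2*m. \<bar>r j\<bar>) + 2*\<bar>r m\<bar> + real k * e"
proof -
  define q where "q = k div m"
  define s where "s = k mod m"
  have q1: "q \<ge> 1" using k m div_le_mono[OF k, of m] by (simp add: q_def)
  have ks: "q*m + s = k" by (simp add: q_def s_def)
  have sm: "s < m" using m by (simp add: s_def)
  have ksum: "(q-1)*m + (m+s) = k" using ks q1 by (cases q) auto
  let ?ks = "replicate (q-1) m @ [m+s]"
  have A: "r (sum_list ?ks) \<le> sum_list (map r ?ks) + real (sum_list ?ks) * e"
  proof -
    have "\<forall>x\<in>set ?ks. x \<ge> 1 \<and> x \<ge> K" using m by auto
    then show ?thesis using H by blast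
  qed
  have S1: "sum_list ?ks = k" using ksum by (simp add: sum_list_replicate)
  have S2: "sum_list (map r ?ks) = real (q-1) * r m + r (m+s)"
    by (simp add: sum_list_replicate)
  have 1: "r k \<le> real (q-1) * r m + r (m+s) + real k * e" using A unfolding S1 S2 .
  have rq: "real (q-1) * real m = real k - real s - real m"
    proof -
    have "real ((q-1)*m + (m+s)) = real k" using ksum by simp
    then show ?thesis unfolding of_nat_add of_nat_mult by linarith
  qed
  have "real (q-1) * r m = real k * (r m / m) - (real s + real m) * (r m / m)"
  proof -
    have "real (q-1) * r m = (real (q-1) * real m) * (r m / m)" using m by simp
    also have "\<dots> = (real k - real s - real m) * (r m / m)" by (simp only: rq)
    also have "\<dots> = real k*(r m/m) - (real s + real m)*(r m/m)" by (simp add: algebra_simps)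
    finally show ?thesis .
  qed
  moreover have "\<bar>(real s + real m) * (r m / m)\<bar> \<le> 2*\<bar>r m\<bar>"
  proof -
    have "\<bar>(real s + real m) * (r m / m)\<bar> = (real s + real m) / m * \<bar>r m\<bar>"
      by (simp add: abs_mult)
    also have "\<dots> \<le> 2 * \<bar>r m\<bar>"
      using sm m by (intro mult_right_mono) (auto simp: field_simps)
    finally show ?thesis .
  qed
  moreover have "r (m+s) \<le> (\<Sum>j<2*m. \<bar>r j\<bar>)"
  proof -
    have "r (m+s) \<le> \<bar>r (m+s)\<bar>" by simp
    also have "\<dots> \<le> (\<Sum>j<2*m. \<bar>r j\<bar>)"
      by (rule member_le_sum[where f="\<lambda>j. \<bar>r j\<bar>"]) (use sm in auto)
    finally show ?thesis .
  qed
  ultimately show ?thesis using 1 by linarith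
qed

theorem lemma2p9:
  fixes r :: "nat \<Rightarrow> real"
  assumes "\<forall>\<epsilon>>0. \<exists>K::nat. \<forall>ks::nat list. ks \<noteq> [] \<longrightarrow>
             (\<forall>x\<in>set ks. x \<ge> 1 \<and> x \<ge> K) \<longrightarrow>
             r (sum_list ks) \<le> sum_list (map r ks) + real (sum_list ks) * \<epsilon>"
  shows "\<exists>L::ereal. ((\<lambda>k. ereal (r k / real k)) \<longlongrightarrow> L) sequentially"
proof -
  define f where "f = (\<lambda>k. ereal (r k / real k))"
  have bound: "\<exists>K. \<forall>m\<ge>K. Limsup sequentially f \<le> ereal (r m / m + 2*e)" if e: "e > 0" for e
  proof -
    obtain K where HK: "\<forall>ks::nat list. ks \<noteq> [] \<longrightarrow>
             (\<forall>x\<in>set ks. x \<ge> 1 \<and> x \<ge> K) \<longrightarrow>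
             r (sum_list ks) \<le> sum_list (map r ks) + real (sum_list ks) * e"
      using assms e by blast
    have "Limsup sequentially f \<le> ereal (r m / m + 2*e)" if mK: "m \<ge> max K 1" for m
    proof (rule Limsup_bounded)
      define C where "C = (\<Sum>j<2*m. \<bar>r j\<bar>) + 2*\<bar>r m\<bar>"
      have C0: "C \<ge> 0" unfolding C_def by (simp add: sum_nonneg)
      obtain N :: nat where N: "C / e \<le> N" using real_arch_simple by blast
      show "\<forall>\<^sub>F k in sequentially. f k \<le> ereal (r m / m + 2*e)"
        unfolding eventually_sequentially
      proof (intro exI allI impI)
        fix k assume k: "k \<ge> max (max N m) 1"
        have "r k \<le> real k * (r m / m) + C + real k * e"
          using key[OF HK, of m k] mK k unfolding C_def by auto
        moreover have "C \<le> real k * e" 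
        proof -
          have "C \<le> real N * e" using N e by (simp add: divide_le_eq)
          also have "\<dots> \<le> real k * e" using k e by (intro mult_right_mono) auto
          finally show ?thesis .
        qed
        ultimately have "r k \<le> real k * (r m / m + 2*e)" by (simp add: algebra_simps)
        then have "r k / real k \<le> r m / m + 2*e" using k
          by (simp add: divide_le_eq mult.commute)
        then show "f k \<le> ereal (r m / m + 2*e)" by (simp add: f_def)
      qed
    qed
    then show ?thesis by blast
  qed
  have "Limsup sequentially f \<le> Liminf sequentially f"
  proof (cases "Limsup sequentially f = -\<infinity>")
    case True then show ?thesis by simp
  next
    case False
    obtain K where "\<forall>m\<ge>K. Limsup sequentially f \<le> ereal (r m / m + 2*1)" using bound[of 1] by auto
    then have "Limsup sequentially f \<noteq> \<infinity>" by auto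
    with False obtain c where c: "Limsup sequentially f = ereal c" by (cases "Limsup sequentially f") auto
    show ?thesis
    proof (rule ereal_le_epsilon2)
      fix e :: real assume e: "e > 0"
      obtain K where K: "\<forall>m\<ge>K. Limsup sequentially f \<le> ereal (r m / m + 2*(e/2))"
        using bound[of "e/2"] e by auto
      have "ereal (c - e) \<le> Liminf sequentially f"
      proof (rule Liminf_bounded)
        show "\<forall>\<^sub>F n in sequentially. ereal (c - e) \<le> f n"
          unfolding eventually_sequentially f_def
          by (intro exI[of _ K]) (use K c in force)
      qed
      then show "Limsup sequentially f \<le> Liminf sequentially f + ereal e"
        using c by (cases "Liminf sequentially f") auto
    qed
  qed
  then have "Liminf sequentially f = Limsup sequentially f"
    using Liminf_le_Limsup[of sequentially f] by auto
  then have "(f \<longlongrightarrow> Liminf sequentially f) sequentially"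
    by (intro Liminf_eq_Limsup) auto
  then show ?thesis unfolding f_def by blast
qed

end
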